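(* For $1\le\ell\le r$ let \[ F_\ell(n)=z_\ell^n n^{q_\ell}\prod_{j=1}^{m_\ell}\mathcal H_{\alpha_{\ell,j}}(p_{\ell,j}n)^{e_{\ell,j}}, \] where $z_\ell,q_\ell\in\mathbb C$, $p_{\ell,j}\in\mathbb Z_{>0}$, $e_{\ell,j}\in\mathbb Z_{\ge0}$ and each $\alpha_{\ell,j}$ is a word. Let $L=\operatorname{lcm}\{p_{\ell,j}\}$ (with $L=1$ if this set is empty). Then for every positive integer $k$, \[ S_r(k)=\sum_{n_r=1}^{k}\sum_{n_{r-1}=1}^{n_r}\cdots\sum_{n_1=1}^{n_2}\prod_{\ell=1}^{r}F_\ell(n_\ell)\in\operatorname{span}_{\mathbb C}\{\mathcal H_\beta(Lk)\}_\beta, \] where $\beta$ ranges over words.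
   Context: A letter is a pair $(r,s)\in\mathbb C^2$ and a word is a finite sequence of letters. For a word $\alpha=((r_1,s_1),\ldots,(r_d,s_d))$ and a positive integer $N$, \[ \mathcal H_{\alpha}(N)=\sum_{N\ge n_1>\cdots>n_d\ge1}\prod_{i=1}^{d}\frac{s_i^{n_i}}{n_i^{r_i}},\qquad \mathcal H_\emptyset(N)=1, \] with $n^r=\exp(r\log n)$ using the real logarithm. *)

theory Defs
  imports "HOL-Analysis.Analysis"
begin

type_synonym letter = "complex \<times> complex"
type_synonym word = "letter list"

text \<open>H_alpha(N): sum over N >= n_1 > ... > n_d >= 1 of prod s_i^n_i / n_i^r_i,
  with n^r = exp(r log n) (complex powr of a positive real uses the real log).
  The tuple (n_1,...,n_d) is the list ns, ns!(i-1) = n_i.\<close>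
definition H :: "word \<Rightarrow> nat \<Rightarrow> complex" where
  "H w N = (\<Sum>ns\<in>{ns::nat list. length ns = length w \<and> sorted_wrt (>) ns \<and> set ns \<subseteq> {1..N}}.
             \<Prod>i<length w. (snd (w!i)) ^ (ns!i) / ((of_nat (ns!i) :: complex) powr (fst (w!i) :: complex)))"

end

theory Submission
  imports Defs
begin

definition xf :: "letter \<Rightarrow> nat \<Rightarrow> complex" where
  "xf x n = snd x ^ n / ((of_nat n :: complex) powr fst x)"

definition Lset :: "nat \<Rightarrow> nat \<Rightarrow> nat list set" where
  "Lset k N = {ns::nat list. length ns = k \<and> sorted_wrt (>) ns \<and> set ns \<subseteq> {1..N}}"

definition T :: "word \<Rightarrow> nat list \<Rightarrow> complex" where
  "T w ns = (\<Prod>i<length w. (snd (w!i)) ^ (ns!i) / ((of_nat (ns!i) :: complex) powr (fst (w!i) :: complex)))"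

lemma H_alt: "H w N = (\<Sum>ns\<in>Lset (length w) N. T w ns)"
  unfolding H_def Lset_def T_def by simp

lemma finite_Lset: "finite (Lset k N)"
proof -
  have "Lset k N \<subseteq> {ns. set ns \<subseteq> {1..N} \<and> length ns = k}" unfolding Lset_def by auto
  moreover have "finite {ns. set ns \<subseteq> {1..N} \<and> length ns = k}"
    by (rule finite_lists_length_eq) simp
  ultimately show ?thesis by (rule finite_subset)
qed

lemma H_Nil: "H [] N = 1"
proof -
  have "Lset 0 N = {[]}" unfolding Lset_def by auto
  then show ?thesis by (simp add: H_alt T_def)
qed

lemma Lset_Suc: "Lset (Suc k) N = (\<lambda>(n,ns). n#ns) ` (SIGMA n:{1..N}. Lset k (n-1))"
proof (intro equalityI subsetI)
  fix xs assume "xs \<in> Lset (Suc k) N"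
  then obtain n ns where xs: "xs = n#ns" and "length ns = k" "\<forall>y\<in>set ns. y < n" "sorted_wrt (>) ns"
    "n \<in> {1..N}" "set ns \<subseteq> {1..N}"
    unfolding Lset_def by (cases xs) auto
  then have "ns \<in> Lset k (n-1)" unfolding Lset_def by fastforce
  with \<open>n \<in> {1..N}\<close> show "xs \<in> (\<lambda>(n,ns). n#ns) ` (SIGMA n:{1..N}. Lset k (n-1))"
    using xs by force
next
  fix xs assume "xs \<in> (\<lambda>(n,ns). n#ns) ` (SIGMA n:{1..N}. Lset k (n-1))"
  then obtain n ns where xs: "xs = n#ns" and n: "n \<in> {1..N}" and ns: "ns \<in> Lset k (n-1)" by auto
  then show "xs \<in> Lset (Suc k) N" unfolding Lset_def by (auto simp: subset_iff)
qed

lemma T_Cons: "T (x#w) (n#ns) = xf x n * T w ns"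
  unfolding T_def xf_def by (simp add: prod.lessThan_Suc_shift del: prod.lessThan_Suc)

lemma H_Cons: "H (x#w) N = (\<Sum>n\<in>{1..N}. xf x n * H w (n - 1))"
proof -
  have inj: "inj_on (\<lambda>(n,ns). n#ns) (SIGMA n:{1..N}. Lset (length w) (n-1))"
    by (auto simp: inj_on_def)
  have "H (x#w) N = (\<Sum>p\<in>(SIGMA n:{1..N}. Lset (length w) (n-1)). T (x#w) (fst p # snd p))"
    unfolding H_alt length_Cons Lset_Suc sum.reindex[OF inj] by (simp add: case_prod_beta)
  also have "\<dots> = (\<Sum>(n,ns)\<in>(SIGMA n:{1..N}. Lset (length w) (n-1)). xf x n * T w ns)"
    by (simp add: T_Cons case_prod_beta)
  also have "\<dots> = (\<Sum>n\<in>{1..N}. \<Sum>ns\<in>Lset (length w) (n-1). xf x n * T w ns)"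
    by (rule sum.Sigma[symmetric]) (auto simp: finite_Lset)
  also have "\<dots> = (\<Sum>n\<in>{1..N}. xf x n * H w (n - 1))"
    by (simp add: H_alt sum_distrib_left)
  finally show ?thesis .
qed

definition V :: "(nat \<Rightarrow> complex) \<Rightarrow> bool" where
  "V f \<longleftrightarrow> (\<exists>B c. finite B \<and> (\<forall>N. f N = (\<Sum>\<beta>\<in>B. c \<beta> * H \<beta> N)))"

lemma V_H: "V (H w)"
  unfolding V_def by (rule exI[of _ "{w}"], rule exI[of _ "\<lambda>_. 1"]) simp

lemma V_0: "V (\<lambda>N. 0)"
  unfolding V_def by (rule exI[of _ "{}"]) simp

lemma V_const: "V (\<lambda>N. a)"
  unfolding V_def by (rule exI[of _ "{[]}"], rule exI[of _ "\<lambda>_. a"]) (simp add: H_Nil)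

lemma V_cong: "V f \<Longrightarrow> (\<And>N. g N = f N) \<Longrightarrow> V g"
proof -
  assume "V f" "\<And>N. g N = f N"
  then have "f = g" by auto
  with \<open>V f\<close> show ?thesis by simp
qed

lemma V_add: assumes "V f" "V g" shows "V (\<lambda>N. f N + g N)"
proof -
  obtain B1 c1 where B1: "finite B1" "\<And>N. f N = (\<Sum>\<beta>\<in>B1. c1 \<beta> * H \<beta> N)"
    using assms(1) unfolding V_def by blast
  obtain B2 c2 where B2: "finite B2" "\<And>N. g N = (\<Sum>\<beta>\<in>B2. c2 \<beta> * H \<beta> N)"
    using assms(2) unfolding V_def by blast
  define c where "c \<beta> = (if \<beta> \<in> B1 then c1 \<beta> else 0) + (if \<beta> \<in> B2 then c2 \<beta> else 0)" for \<beta>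
  have "f N + g N = (\<Sum>\<beta>\<in>B1 \<union> B2. c \<beta> * H \<beta> N)" for N
  proof -
    have e1: "(\<Sum>\<beta>\<in>B1 \<union> B2. (if \<beta> \<in> B1 then c1 \<beta> else 0) * H \<beta> N) = f N"
      unfolding B1(2) by (rule sum.mono_neutral_cong_right) (auto simp: B1 B2)
    have e2: "(\<Sum>\<beta>\<in>B1 \<union> B2. (if \<beta> \<in> B2 then c2 \<beta> else 0) * H \<beta> N) = g N"
      unfolding B2(2) by (rule sum.mono_neutral_cong_right) (auto simp: B1 B2)
    show ?thesis unfolding c_def distrib_right sum.distrib e1 e2 ..
  qed
  then show ?thesis unfolding V_def using B1(1) B2(1) by (intro exI[of _ "B1 \<union> B2"] exI[of _ c]) simp
qed

lemma V_scale: assumes "V f" shows "V (\<lambda>N. a * f N)"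
proof -
  obtain B c where B: "finite B" "\<And>N. f N = (\<Sum>\<beta>\<in>B. c \<beta> * H \<beta> N)"
    using assms(1) unfolding V_def by blast
  have "a * f N = (\<Sum>\<beta>\<in>B. (\<lambda>\<beta>. a * c \<beta>) \<beta> * H \<beta> N)" for N
    unfolding B(2) sum_distrib_left by (simp add: mult.assoc)
  then show ?thesis unfolding V_def using B(1) by (intro exI[of _ B] exI[of _ "\<lambda>\<beta>. a * c \<beta>"]) simp
qed

lemma V_sum: "finite I \<Longrightarrow> (\<And>i. i \<in> I \<Longrightarrow> V (g i)) \<Longrightarrow> V (\<lambda>N. \<Sum>i\<in>I. g i N)"
proof (induction I rule: finite_induct)
  case empty
  then show ?case by (simp add: V_0)
next
  case (insert x F)
  then show ?case by (simp add: V_add)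
qed

lemma V_strict: assumes "V f" shows "V (\<lambda>N. \<Sum>n\<in>{1..N}. xf x n * f (n - 1))"
proof -
  obtain B c where B: "finite B" "\<And>N. f N = (\<Sum>\<beta>\<in>B. c \<beta> * H \<beta> N)"
    using assms(1) unfolding V_def by blast
  have eq: "(\<Sum>n\<in>{1..N}. xf x n * f (n - 1)) = (\<Sum>\<beta>\<in>B. c \<beta> * H (x#\<beta>) N)" for N
    unfolding B(2) H_Cons sum_distrib_left
    by (subst sum.swap) (simp add: mult_ac)
  have vv: "V (\<lambda>N. \<Sum>\<beta>\<in>B. c \<beta> * H (x#\<beta>) N)"
    by (rule V_sum[OF B(1)]) (rule V_scale[OF V_H])
  show ?thesis by (rule V_cong[OF vv eq])
qed

lemma H_Cons_step: "1 \<le> n \<Longrightarrow> H (y#w) n = H (y#w) (n-1) + xf y n * H w (n-1)"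
  by (cases n) (simp_all add: H_Cons)

definition lp :: "letter \<Rightarrow> letter \<Rightarrow> letter" where
  "lp x y = (fst x + fst y, snd x * snd y)"

lemma xf_lp: "xf x n * xf y n = xf (lp x y) n"
  unfolding xf_def lp_def by (simp add: powr_add power_mult_distrib)

lemma V_weak_H: "V (\<lambda>N. \<Sum>n\<in>{1..N}. xf x n * H \<beta> n)"
proof (cases \<beta>)
  case Nil
  then show ?thesis by (intro V_cong[OF V_H[of "[x]"]]) (simp add: H_Cons H_Nil)
next
  case (Cons y w)
  have "(\<Sum>n\<in>{1..N}. xf x n * H \<beta> n) = H (x#\<beta>) N + H (lp x y # w) N" for N
  proof -
    have "(\<Sum>n\<in>{1..N}. xf x n * H \<beta> n) =
       (\<Sum>n\<in>{1..N}. xf x n * H \<beta> (n-1) + xf (lp x y) n * H w (n-1))"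
    proof (rule sum.cong[OF refl])
      fix n assume "n \<in> {1..N}"
      then have "H \<beta> n = H \<beta> (n-1) + xf y n * H w (n-1)" using H_Cons_step[of n y w] Cons by simp
      then show "xf x n * H \<beta> n = xf x n * H \<beta> (n-1) + xf (lp x y) n * H w (n-1)"
        by (simp only: distrib_left xf_lp[symmetric] mult.assoc)
    qed
    then show ?thesis by (simp add: H_Cons sum.distrib)
  qed
  then show ?thesis by (intro V_cong[OF V_add[OF V_H V_H]])
qed

lemma V_weak: assumes "V f" shows "V (\<lambda>N. \<Sum>n\<in>{1..N}. xf x n * f n)"
proof -
  obtain B c where B: "finite B" "\<And>N. f N = (\<Sum>\<beta>\<in>B. c \<beta> * H \<beta> N)"
    using assms(1) unfolding V_def by blast
  have eq: "(\<Sum>n\<in>{1..N}. xf x n * f n) = (\<Sum>\<beta>\<in>B. c \<beta> * (\<Sum>n\<in>{1..N}. xf x n * H \<beta> n))" for N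
    unfolding B(2) sum_distrib_left
    by (subst sum.swap) (simp add: mult_ac)
  have vv: "V (\<lambda>N. \<Sum>\<beta>\<in>B. c \<beta> * (\<Sum>n\<in>{1..N}. xf x n * H \<beta> n))"
    by (rule V_sum[OF B(1)]) (rule V_scale[OF V_weak_H])
  show ?thesis by (rule V_cong[OF vv eq])
qed

lemma HH_step: "H (x#a) N * H (y#b) N = (\<Sum>n\<in>{1..N}.
   xf x n * (H a (n-1) * H (y#b) (n-1)) + xf y n * (H (x#a) (n-1) * H b (n-1))
   + xf (lp x y) n * (H a (n-1) * H b (n-1)))"
proof (induction N)
  case 0
  then show ?case by (simp add: H_Cons)
next
  case (Suc N)
  have "H (x#a) (Suc N) * H (y#b) (Suc N) = (H (x#a) N + xf x (Suc N) * H a N) * (H (y#b) N + xf y (Suc N) * H b N)"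
    using H_Cons_step[of "Suc N"] by simp
  also have "\<dots> = H (x#a) N * H (y#b) N + (xf x (Suc N) * (H a N * H (y#b) N) + xf y (Suc N) * (H (x#a) N * H b N)
      + xf (lp x y) (Suc N) * (H a N * H b N))"
    by (simp add: xf_lp[symmetric] algebra_simps)
  finally show ?case using Suc by simp
qed

lemma V_HH: "V (\<lambda>N. H a N * H b N)"
proof (induction "length a + length b" arbitrary: a b rule: less_induct)
  case less
  show ?case
  proof (cases a)
    case Nil
    then show ?thesis using V_H[of b] by (simp add: H_Nil)
  next
    case (Cons x a')
    show ?thesis
    proof (cases b)
      case Nil
      then show ?thesis using V_H[of a] by (simp add: H_Nil)
    next
      case (Cons y b')
      have i1: "V (\<lambda>N. H a' N * H b N)" using less \<open>a = x#a'\<close> by simp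
      have i2: "V (\<lambda>N. H a N * H b' N)" using less \<open>b = y#b'\<close> by simp
      have i3: "V (\<lambda>N. H a' N * H b' N)" using less \<open>a = x#a'\<close> \<open>b = y#b'\<close> by simp
      have "V (\<lambda>N. (\<Sum>n\<in>{1..N}. xf x n * (H a' (n-1) * H b (n-1))) + (\<Sum>n\<in>{1..N}. xf y n * (H a (n-1) * H b' (n-1)))
          + (\<Sum>n\<in>{1..N}. xf (lp x y) n * (H a' (n-1) * H b' (n-1))))"
        by (intro V_add V_strict[OF i1] V_strict[OF i2] V_strict[OF i3])
      then show ?thesis
        by (rule V_cong) (simp add: \<open>a = x#a'\<close> \<open>b = y#b'\<close> HH_step sum.distrib)
    qed
  qed
qed

lemma V_mult: assumes "V f" "V g" shows "V (\<lambda>N. f N * g N)"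
proof -
  obtain B1 c1 where B1: "finite B1" "\<And>N. f N = (\<Sum>\<beta>\<in>B1. c1 \<beta> * H \<beta> N)"
    using assms(1) unfolding V_def by blast
  obtain B2 c2 where B2: "finite B2" "\<And>N. g N = (\<Sum>\<beta>\<in>B2. c2 \<beta> * H \<beta> N)"
    using assms(2) unfolding V_def by blast
  have eq: "f N * g N = (\<Sum>\<beta>\<in>B1. \<Sum>\<gamma>\<in>B2. (c1 \<beta> * c2 \<gamma>) * (H \<beta> N * H \<gamma> N))" for N
    unfolding B1(2) B2(2) sum_product by (simp add: mult_ac)
  have vv: "V (\<lambda>N. \<Sum>\<beta>\<in>B1. \<Sum>\<gamma>\<in>B2. (c1 \<beta> * c2 \<gamma>) * (H \<beta> N * H \<gamma> N))"
    by (intro V_sum B1(1) B2(1) V_scale V_HH)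
  show ?thesis by (rule V_cong[OF vv eq])
qed

lemma V_power: "V f \<Longrightarrow> V (\<lambda>N. f N ^ k)"
  by (induction k) (simp_all add: V_const V_mult)

lemma V_prod: "finite I \<Longrightarrow> (\<And>i. i \<in> I \<Longrightarrow> V (g i)) \<Longrightarrow> V (\<lambda>N. \<Prod>i\<in>I. g i N)"
proof (induction I rule: finite_induct)
  case empty
  then show ?case by (simp add: V_const)
next
  case (insert x F)
  then show ?case by (simp add: V_mult)
qed

lemma sum_div_reindex:
  fixes d N :: nat
  assumes d: "0 < d"
  shows "(\<Sum>n\<in>{1..N div d}. \<phi> n) = (\<Sum>m\<in>{1..N}. if d dvd m then \<phi> (m div d) else 0)"
proof -
  have "(\<Sum>m\<in>{1..N}. if d dvd m then \<phi> (m div d) else 0) = (\<Sum>m\<in>{m\<in>{1..N}. d dvd m}. \<phi> (m div d))"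
    by (subst sum.inter_filter) auto
  also have "{m\<in>{1..N}. d dvd m} = (\<lambda>n. d*n) ` {1..N div d}"
  proof (intro equalityI subsetI)
    fix m assume "m \<in> {m\<in>{1..N}. d dvd m}"
    then obtain k where m: "m = d*k" "1 \<le> m" "m \<le> N" by auto
    then have "1 \<le> k" "k \<le> N div d" using d by (auto simp: less_eq_div_iff_mult_less_eq mult.commute intro: Suc_leI)
    then show "m \<in> (\<lambda>n. d*n) ` {1..N div d}" using m by auto
  next
    fix m assume "m \<in> (\<lambda>n. d*n) ` {1..N div d}"
    then obtain k where k: "k \<in> {1..N div d}" and m: "m = d*k" by (rule imageE)
    have "d * k \<le> d * (N div d)" using k by (intro mult_le_mono2) simp
    also have "d * (N div d) \<le> N" by simp
    finally have "d * k \<le> N" .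
    moreover have "1 \<le> d * k" using k d by simp
    ultimately show "m \<in> {m\<in>{1..N}. d dvd m}" using m by simp
  qed
  also have "(\<Sum>m\<in>(\<lambda>n. d*n) ` {1..N div d}. \<phi> (m div d)) = (\<Sum>n\<in>{1..N div d}. \<phi> n)"
    using d by (subst sum.reindex) (auto simp: inj_on_def)
  finally show ?thesis ..
qed

lemma unity_sum:
  assumes d: "0 < d"
  shows "(\<Sum>j<d. (exp (2 * of_real pi * \<i> / of_nat d) ^ j) ^ m) = (if d dvd m then of_nat d else (0::complex))"
proof -
  define u where "u = exp (2 * of_real pi * \<i> * of_nat m / of_nat d)"
  have wm: "exp (2 * of_real pi * \<i> / of_nat d) ^ m = u"
    unfolding u_def exp_of_nat_mult[symmetric] by (simp add: field_simps)
  have "(\<Sum>j<d. (exp (2 * of_real pi * \<i> / of_nat d) ^ j) ^ m) = (\<Sum>j<d. u ^ j)"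
    by (simp add: power_mult[symmetric] mult.commute[of _ m] power_mult wm)
  also have "\<dots> = (if d dvd m then of_nat d else 0)"
  proof (cases "d dvd m")
    case True
    then have "u = 1" unfolding u_def using complex_root_unity_eq_1[of d m] d by simp
    then show ?thesis using True by simp
  next
    case False
    then have u1: "u \<noteq> 1" unfolding u_def using complex_root_unity_eq_1[of d m] d by simp
    have "u ^ d = exp (of_nat d * (2 * of_real pi * \<i> * of_nat m / of_nat d))"
      unfolding u_def exp_of_nat_mult ..
    also have "\<dots> = exp (\<i> * (of_nat m * (of_real pi * 2)))" using d by (simp add: field_simps)
    also have "\<dots> = 1" by (rule exp_2pi_1_nat)
    finally show ?thesis using False u1 by (simp add: geometric_sum)
  qed
  finally show ?thesis .
qed

lemma root_exists: "0 < d \<Longrightarrow> \<exists>t::complex. t ^ d = s"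
proof (cases "s = 0")
  case True
  assume "0 < d" then show ?thesis using True by (intro exI[of _ 0]) simp
next
  case False
  assume d: "0 < d"
  have "exp (Ln s / of_nat d) ^ d = exp (of_nat d * (Ln s / of_nat d))" by (simp only: exp_of_nat_mult)
  also have "of_nat d * (Ln s / of_nat d) = Ln s" using d by simp
  also have "exp (Ln s) = s" using False by simp
  finally show ?thesis by blast
qed

lemma powr_nat_mult: "(of_nat (a*b) :: complex) powr r = of_nat a powr r * of_nat b powr r"
  by (simp add: powr_times_real)

lemma filter_letter:
  assumes d: "0 < d"
  shows "\<exists>C ts. \<forall>m\<ge>1. (if d dvd m then xf x (m div d) else 0) = (\<Sum>j<d. C * xf (fst x, ts j) m)"
proof -
  obtain t where t: "t ^ d = snd x" using root_exists[OF d] by blast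
  define w where "w = exp (2 * of_real pi * \<i> / of_nat d)"
  define C where "C = (of_nat d :: complex) powr fst x / of_nat d"
  have "(if d dvd m then xf x (m div d) else 0) = (\<Sum>j<d. C * xf (fst x, t * w ^ j) m)" if m: "m \<ge> 1" for m
  proof -
    have "(\<Sum>j<d. C * xf (fst x, t * w ^ j) m) = C * t ^ m / of_nat m powr fst x * (\<Sum>j<d. (w ^ j) ^ m)"
      unfolding xf_def sum_distrib_left by (simp add: power_mult_distrib mult_ac)
    also have "\<dots> = C * t ^ m / of_nat m powr fst x * (if d dvd m then of_nat d else 0)"
      unfolding w_def unity_sum[OF d] ..
    also have "\<dots> = (if d dvd m then xf x (m div d) else 0)"
    proof (cases "d dvd m")
      case True
      then obtain k where k: "m = d * k" by blast
      have tm: "t ^ (d * k) = snd x ^ k" by (simp add: power_mult t)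
      have nz: "(of_nat d :: complex) powr fst x \<noteq> 0" using d by simp
      show ?thesis using True d nz unfolding k xf_def C_def tm powr_nat_mult by (simp add: field_simps)
    qed simp
    finally show ?thesis ..
  qed
  then show ?thesis by (intro exI[of _ C] exI[of _ "\<lambda>j. t * w ^ j"]) simp
qed

lemma div_pred: "0 < (d::nat) \<Longrightarrow> d dvd m \<Longrightarrow> 1 \<le> m \<Longrightarrow> (m - 1) div d = m div d - 1"
proof -
  assume d: "0 < d" and "d dvd m" and m: "1 \<le> m"
  then obtain k where k: "m = d * k" by blast
  with m obtain k' where k': "k = Suc k'" by (cases k) auto
  have "m - 1 = (d - 1) + d * k'" using k k' d by (cases d) auto
  moreover have "(d - 1 + d * k') div d = k'" using d by (subst div_mult_self2) auto
  ultimately have "(m - 1) div d = k'" by simp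
  then show ?thesis using k k' d by simp
qed

lemma V_dil: assumes d: "0 < d" shows "V (\<lambda>N. H \<alpha> (N div d))"
proof (induction \<alpha>)
  case Nil
  then show ?case by (simp add: H_Nil V_const)
next
  case (Cons x \<alpha>)
  obtain C ts where f: "\<And>m. m \<ge> 1 \<Longrightarrow> (if d dvd m then xf x (m div d) else 0) = (\<Sum>j<d. C * xf (fst x, ts j) m)"
    using filter_letter[OF d] by blast
  have eq: "H (x#\<alpha>) (N div d) = (\<Sum>j<d. C * (\<Sum>m\<in>{1..N}. xf (fst x, ts j) m * H \<alpha> ((m-1) div d)))" for N
  proof -
    have "H (x#\<alpha>) (N div d) = (\<Sum>m\<in>{1..N}. if d dvd m then xf x (m div d) * H \<alpha> (m div d - 1) else 0)"
      unfolding H_Cons by (rule sum_div_reindex[OF d])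
    also have "\<dots> = (\<Sum>m\<in>{1..N}. (if d dvd m then xf x (m div d) else 0) * H \<alpha> ((m-1) div d))"
    proof (rule sum.cong[OF refl])
      fix m assume m: "m \<in> {1..N}"
      show "(if d dvd m then xf x (m div d) * H \<alpha> (m div d - 1) else 0) =
        (if d dvd m then xf x (m div d) else 0) * H \<alpha> ((m-1) div d)"
        using div_pred[OF d, of m] m by auto
    qed
    also have "\<dots> = (\<Sum>m\<in>{1..N}. (\<Sum>j<d. C * xf (fst x, ts j) m) * H \<alpha> ((m-1) div d))"
      by (rule sum.cong) (auto simp: f)
    also have "\<dots> = (\<Sum>j<d. C * (\<Sum>m\<in>{1..N}. xf (fst x, ts j) m * H \<alpha> ((m-1) div d)))"
      unfolding sum_distrib_right sum_distrib_left by (subst sum.swap) (simp add: mult_ac)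
    finally show ?thesis .
  qed
  have vv: "V (\<lambda>N. \<Sum>j<d. C * (\<Sum>m\<in>{1..N}. xf (fst x, ts j) m * H \<alpha> ((m-1) div d)))"
    by (intro V_sum finite_lessThan V_scale V_strict[OF Cons])
  show ?case by (rule V_cong[OF vv eq])
qed

definition SL :: "nat \<Rightarrow> nat \<Rightarrow> nat list set" where
  "SL l k = {ns. length ns = l \<and> sorted ns \<and> set ns \<subseteq> {1..k}}"

definition A :: "(nat \<Rightarrow> nat \<Rightarrow> complex) \<Rightarrow> nat \<Rightarrow> nat \<Rightarrow> complex" where
  "A F l k = (\<Sum>ns\<in>SL l k. \<Prod>i\<in>{1..l}. F i (ns!(i-1)))"

lemma finite_SL: "finite (SL l k)"
proof -
  have "SL l k \<subseteq> {ns. set ns \<subseteq> {1..k} \<and> length ns = l}" unfolding SL_def by auto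
  moreover have "finite {ns. set ns \<subseteq> {1..k} \<and> length ns = l}"
    by (rule finite_lists_length_eq) simp
  ultimately show ?thesis by (rule finite_subset)
qed

lemma A_0: "A F 0 k = 1"
proof -
  have "SL 0 k = {[]}" unfolding SL_def by auto
  then show ?thesis unfolding A_def by simp
qed

lemma SL_Suc: "SL (Suc l) k = (\<lambda>(n,ns). ns @ [n]) ` (SIGMA n:{1..k}. SL l n)"
proof (intro equalityI subsetI)
  fix xs assume xs: "xs \<in> SL (Suc l) k"
  then have "xs \<noteq> []" unfolding SL_def by auto
  then obtain ns n where e: "xs = ns @ [n]" by (metis rev_exhaust)
  then have "ns \<in> SL l n" "n \<in> {1..k}" using xs unfolding SL_def by (auto simp: sorted_append subset_iff)
  then show "xs \<in> (\<lambda>(n,ns). ns @ [n]) ` (SIGMA n:{1..k}. SL l n)" using e by force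
next
  fix xs assume "xs \<in> (\<lambda>(n,ns). ns @ [n]) ` (SIGMA n:{1..k}. SL l n)"
  then obtain n ns where xs: "xs = ns @ [n]" and n: "n \<in> {1..k}" and ns: "ns \<in> SL l n" by auto
  then show "xs \<in> SL (Suc l) k" unfolding SL_def by (auto simp: sorted_append subset_iff)
qed

lemma A_Suc: "A F (Suc l) k = (\<Sum>n\<in>{1..k}. F (Suc l) n * A F l n)"
proof -
  have inj: "inj_on (\<lambda>(n,ns). ns @ [n]) (SIGMA n:{1..k}. SL l n)"
    by (auto simp: inj_on_def)
  have pr: "(\<Prod>i\<in>{1..Suc l}. F i ((ns @ [n])!(i-1))) = F (Suc l) n * (\<Prod>i\<in>{1..l}. F i (ns!(i-1)))"
    if "ns \<in> SL l n" for n ns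
  proof -
    have len: "length ns = l" using that unfolding SL_def by auto
    have "(\<Prod>i\<in>{1..l}. F i ((ns @ [n])!(i-1))) = (\<Prod>i\<in>{1..l}. F i (ns!(i-1)))"
      by (rule prod.cong) (auto simp: nth_append len)
    then show ?thesis by (simp add: prod.cl_ivl_Suc nth_append len)
  qed
  have "A F (Suc l) k = (\<Sum>p\<in>(SIGMA n:{1..k}. SL l n). \<Prod>i\<in>{1..Suc l}. F i ((snd p @ [fst p])!(i-1)))"
    unfolding A_def SL_Suc sum.reindex[OF inj] by (simp add: case_prod_beta)
  also have "\<dots> = (\<Sum>(n,ns)\<in>(SIGMA n:{1..k}. SL l n). F (Suc l) n * (\<Prod>i\<in>{1..l}. F i (ns!(i-1))))"
  proof (rule sum.cong[OF refl])
    fix p assume "p \<in> (SIGMA n:{1..k}. SL l n)"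
    then obtain n ns where p: "p = (n,ns)" and ns: "ns \<in> SL l n" by auto
    show "(\<Prod>i\<in>{1..Suc l}. F i ((snd p @ [fst p])!(i-1))) =
      (case p of (n,ns) \<Rightarrow> F (Suc l) n * (\<Prod>i\<in>{1..l}. F i (ns!(i-1))))"
      unfolding p fst_conv snd_conv prod.case by (rule pr[OF ns])
  qed
  also have "\<dots> = (\<Sum>n\<in>{1..k}. \<Sum>ns\<in>SL l n. F (Suc l) n * (\<Prod>i\<in>{1..l}. F i (ns!(i-1))))"
    by (rule sum.Sigma[symmetric]) (auto simp: finite_SL)
  also have "\<dots> = (\<Sum>n\<in>{1..k}. F (Suc l) n * A F l n)"
    by (simp add: A_def sum_distrib_left)
  finally show ?thesis .
qed

lemma xf_neg: "xf (- q, z) n = z ^ n * (of_nat n :: complex) powr q"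
  unfolding xf_def by (simp add: powr_minus divide_inverse)

theorem theorem7p1:
  fixes r :: nat
    and z q :: "nat \<Rightarrow> complex"
    and m :: "nat \<Rightarrow> nat"
    and p e :: "nat \<Rightarrow> nat \<Rightarrow> nat"
    and \<alpha> :: "nat \<Rightarrow> nat \<Rightarrow> word"
    and F :: "nat \<Rightarrow> nat \<Rightarrow> complex"
    and L :: nat
    and S :: "nat \<Rightarrow> complex"
  assumes r_pos: "1 \<le> r"
    and p_pos: "\<And>l j. 1 \<le> l \<Longrightarrow> l \<le> r \<Longrightarrow> 1 \<le> j \<Longrightarrow> j \<le> m l \<Longrightarrow> 0 < p l j"
    and F_def: "\<And>l n. F l n = z l ^ n * ((of_nat n :: complex) powr q l) *
                  (\<Prod>j\<in>{1..m l}. H (\<alpha> l j) (p l j * n) ^ e l j)"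
    and L_def: "L = Lcm {p l j | l j. 1 \<le> l \<and> l \<le> r \<and> 1 \<le> j \<and> j \<le> m l}"
    and S_def: "\<And>k. S k = (\<Sum>ns\<in>{ns. length ns = r \<and> sorted ns \<and> set ns \<subseteq> {1..k}}.
                  \<Prod>l\<in>{1..r}. F l (ns!(l-1)))"
  shows "\<exists>B c. finite B \<and> (\<forall>k\<ge>1. S k = (\<Sum>\<beta>\<in>B. c \<beta> * H \<beta> (L * k)))"
proof -
  define P where "P = {p l j | l j. 1 \<le> l \<and> l \<le> r \<and> 1 \<le> j \<and> j \<le> m l}"
  have "P \<subseteq> (\<lambda>(l,j). p l j) ` (SIGMA l:{1..r}. {1..m l})" unfolding P_def by force
  then have finP: "finite P" by (rule finite_subset) auto
  have "0 \<notin> P" unfolding P_def using p_pos by force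
  then have "Lcm P \<noteq> 0" using Lcm_0_iff_nat[OF finP] by simp
  then have Lpos: "0 < L" unfolding L_def P_def[symmetric] by simp
  have pdvd: "p l j dvd L" if "1 \<le> l" "l \<le> r" "1 \<le> j" "j \<le> m l" for l j
    unfolding L_def by (rule dvd_Lcm) (use that in blast)
  have main: "l \<le> r \<Longrightarrow> \<exists>g. V g \<and> (\<forall>k. A F l k = g (L*k))" for l
  proof (induction l)
    case 0
    show ?case using V_const[of 1] by (auto simp: A_0)
  next
    case (Suc l)
    then obtain g where Vg: "V g" and g: "\<And>k. A F l k = g (L*k)" by auto
    define l' where "l' = Suc l"
    define d where "d j = L div p l' j" for j
    have dpos: "0 < d j" and pd: "p l' j * d j = L" if "j \<in> {1..m l'}" for j
    proof -
      have "p l' j dvd L" "0 < p l' j" using that Suc.prems pdvd p_pos unfolding l'_def by auto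
      then show "p l' j * d j = L" unfolding d_def by simp
      then show "0 < d j" using Lpos by (cases "d j") auto
    qed
    define G where "G N = (\<Prod>j\<in>{1..m l'}. H (\<alpha> l' j) (N div d j) ^ e l' j) * g N" for N
    have VG: "V G" unfolding G_def
      by (intro V_mult Vg V_prod finite_atLeastAtMost V_power V_dil dpos)
    have FG: "F l' n * A F l n = xf (- q l', z l') n * G (L*n)" for n
    proof -
      have "(\<Prod>j\<in>{1..m l'}. H (\<alpha> l' j) (p l' j * n) ^ e l' j) = (\<Prod>j\<in>{1..m l'}. H (\<alpha> l' j) ((L*n) div d j) ^ e l' j)"
      proof (rule prod.cong)
        fix j assume j: "j \<in> {1..m l'}"
        have "(L*n) div d j = p l' j * n" using pd[OF j] dpos[OF j]
          by (metis mult.assoc mult.commute nonzero_mult_div_cancel_left not_less0 less_irrefl gr0I)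
        then show "H (\<alpha> l' j) (p l' j * n) ^ e l' j = H (\<alpha> l' j) ((L*n) div d j) ^ e l' j" by simp
      qed simp
      then show ?thesis unfolding F_def G_def xf_neg g by (simp add: mult_ac)
    qed
    obtain C ts where f: "\<And>m. m \<ge> 1 \<Longrightarrow> (if L dvd m then xf (- q l', z l') (m div L) else 0) = (\<Sum>j<L. C * xf (- q l', ts j) m)"
      using filter_letter[OF Lpos, of "(- q l', z l')"] by auto
    define h where "h N = (\<Sum>j<L. C * (\<Sum>m\<in>{1..N}. xf (- q l', ts j) m * G m))" for N
    have Vh: "V h" unfolding h_def by (intro V_sum finite_lessThan V_scale V_weak[OF VG])
    have "A F l' k = h (L*k)" for k
    proof -
      have "A F l' k = (\<Sum>n\<in>{1..(L*k) div L}. xf (- q l', z l') n * G (L*n))"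
        using Lpos by (simp add: l'_def A_Suc FG[unfolded l'_def])
      also have "\<dots> = (\<Sum>m\<in>{1..L*k}. if L dvd m then xf (- q l', z l') (m div L) * G (L * (m div L)) else 0)"
        by (rule sum_div_reindex[OF Lpos])
      also have "\<dots> = (\<Sum>m\<in>{1..L*k}. (if L dvd m then xf (- q l', z l') (m div L) else 0) * G m)"
        by (rule sum.cong) auto
      also have "\<dots> = (\<Sum>m\<in>{1..L*k}. (\<Sum>j<L. C * xf (- q l', ts j) m) * G m)"
        by (rule sum.cong) (auto simp: f)
      also have "\<dots> = h (L*k)"
        unfolding h_def sum_distrib_right sum_distrib_left by (subst sum.swap) (simp add: mult_ac)
      finally show ?thesis .
    qed
    then show ?case using Vh unfolding l'_def by blast
  qed
  obtain g where Vg: "V g" and g: "\<And>k. A F r k = g (L*k)" using main by blast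
  obtain B c where B: "finite B" "\<And>N. g N = (\<Sum>\<beta>\<in>B. c \<beta> * H \<beta> N)"
    using Vg unfolding V_def by blast
  have "S k = A F r k" for k unfolding S_def A_def SL_def ..
  then show ?thesis using B g by metis
qed

end
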